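(* Let $n\ge1$, $0\le N_b<n$, $p\in[0,1]$, and $N_l=n-N_b$. In the $p$-parking process on $\mathbb{Z}/n\mathbb{Z}$ with $N_b$ cars, let $H^1$ be the set of free parking spots after all cars have parked. For every $X\subseteq\mathbb{Z}/n\mathbb{Z}$ with $|X|=N_l$, writing $\ell_i=\Delta_iX$ for $i\in\mathbb{Z}/N_l\mathbb{Z}$, $$\mathbb{P}(H^1=X)=\frac{1}{n^{N_b}}\binom{N_b}{\ell_1,\dots,\ell_{N_l}}\prod_{i\in\mathbb{Z}/N_l\mathbb{Z}}(\ell_i+1)^{\ell_i-1}.$$ In particular it does not depend on $p$.
   Context: $p$-parking process: initially every vertex of $\mathbb{Z}/n\mathbb{Z}$ is a free parking spot. $N_b$ cars arrive successively; the $i$-th car chooses a vertex $v_i$ uniformly at random, independently of everything else, and from $v_i$ performs a random walk (from $k$ to $k+1\bmod n$ w.p. $p$, to $k-1\bmod n$ w.p. $1-p$) until it is at a free spot (possibly $v_i$ itself), where it parks; that spot is then occupied forever. Block notation: with $\pi:\mathbb{Z}/n\mathbb{Z}\to\{1,\dots,n\}$ the canonical bijection, a set $X$ of size $k$ is listed as $(x_i)_{i\in\mathbb{Z}/k\mathbb{Z}}$ with $\pi(x_1)<\dots<\pi(x_k)=\pi(x_0)$, and $\Delta_iX=\pi(x_{i+1})-\pi(x_i)-1\bmod n$. *)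

theory Defs
  imports Complex_Main
begin

text \<open>Vertices of the cycle Z/nZ are encoded as the naturals 0,...,n-1; the canonical
bijection pi is then v |-> v+1, which is order preserving.\<close>

definition walk_step :: "nat \<Rightarrow> real \<Rightarrow> nat \<Rightarrow> nat \<Rightarrow> real" where
  "walk_step n p z y =
     (if y = (z + 1) mod n then p else 0) + (if y = (z + n - 1) mod n then 1 - p else 0)"

fun walk_killed :: "nat \<Rightarrow> real \<Rightarrow> nat set \<Rightarrow> nat \<Rightarrow> nat \<Rightarrow> nat \<Rightarrow> real" where
  "walk_killed n p Occ 0 v y = (if y = v then 1 else 0)"
| "walk_killed n p Occ (Suc k) v y = (\<Sum>z\<in>Occ. walk_killed n p Occ k v z * walk_step n p z y)"

text \<open>Probability that a car starting at v, with occupied set Occ, parks at the free spot x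
 (i.e. the walk first hits the free set {0..<n} - Occ at x).\<close>
definition park_at :: "nat \<Rightarrow> real \<Rightarrow> nat set \<Rightarrow> nat \<Rightarrow> nat \<Rightarrow> real" where
  "park_at n p Occ v x = (if x < n \<and> x \<notin> Occ then (\<Sum>k. walk_killed n p Occ k v x) else 0)"

fun occupied_prob :: "nat \<Rightarrow> real \<Rightarrow> nat \<Rightarrow> nat set \<Rightarrow> real" where
  "occupied_prob n p 0 S = (if S = {} then 1 else 0)"
| "occupied_prob n p (Suc k) S =
     (if S \<subseteq> {0..<n} then
        (\<Sum>x\<in>S. occupied_prob n p k (S - {x}) *
                   ((\<Sum>v<n. park_at n p (S - {x}) v x) / real n))
      else 0)"

definition free_prob :: "nat \<Rightarrow> real \<Rightarrow> nat \<Rightarrow> nat set \<Rightarrow> real" where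
  "free_prob n p Nb X = occupied_prob n p Nb ({0..<n} - X)"

text \<open>Gap Delta_i X = pi(x_{i+1}) - pi(x_i) - 1 mod n, where x_0 < ... < x_{k-1} lists X
 (0-indexed; indices taken mod k = card X).\<close>
definition gap :: "nat \<Rightarrow> nat set \<Rightarrow> nat \<Rightarrow> nat" where
  "gap n X i = (let xs = sorted_list_of_set X; k = length xs in
     nat ((int (xs ! ((i + 1) mod k)) - int (xs ! i) - 1) mod int n))"

end

theory Submission
  imports Defs
begin


lemma fd_step:
  fixes f :: "nat \<Rightarrow> real"
  shows "(\<Sum>k\<le>Suc m. real (Suc m choose k) * (-1)^k * f k) =
         (\<Sum>k\<le>m. real (m choose k) * (-1)^k * (f k - f (Suc k)))"
proof -
  have A0: "(\<Sum>k\<le>Suc m. real (Suc m choose k) * (-1)^k * f k) =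
     f 0 + (\<Sum>k\<le>m. real (m choose Suc k) * (-1)^(Suc k) * f (Suc k)
         + real (m choose k) * (-1)^(Suc k) * f (Suc k))"
    by (simp add: sum.atMost_Suc_shift algebra_simps del: sum.atMost_Suc)
  have A: "(\<Sum>k\<le>Suc m. real (Suc m choose k) * (-1)^k * f k) =
     f 0 + (\<Sum>k\<le>m. real (m choose Suc k) * (-1)^(Suc k) * f (Suc k))
         + (\<Sum>k\<le>m. real (m choose k) * (-1)^(Suc k) * f (Suc k))"
    unfolding A0 sum.distrib by simp
  have B: "(\<Sum>k\<le>m. real (m choose k) * (-1)^k * f k) =
      f 0 + (\<Sum>k\<le>m. real (m choose Suc k) * (-1)^(Suc k) * f (Suc k))"
  proof -
    have "(\<Sum>k\<le>m. real (m choose k) * (-1)^k * f k) = (\<Sum>k\<le>Suc m. real (m choose k) * (-1)^k * f k)"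
      by simp
    also have "\<dots> = f 0 + (\<Sum>k\<le>m. real (m choose Suc k) * (-1)^(Suc k) * f (Suc k))"
      by (simp add: sum.atMost_Suc_shift del: sum.atMost_Suc)
    finally show ?thesis .
  qed
  have C: "(\<Sum>k\<le>m. real (m choose k) * (-1)^k * (f k - f (Suc k))) =
     (\<Sum>k\<le>m. real (m choose k) * (-1)^k * f k) + (\<Sum>k\<le>m. real (m choose k) * (-1)^(Suc k) * f (Suc k))"
    unfolding sum.distrib[symmetric] by (rule sum.cong) (auto simp: algebra_simps)
  show ?thesis using A B C by simp
qed

lemma fd_poly:
  "j < m \<Longrightarrow> (\<Sum>k\<le>m. real (m choose k) * (-1)^k * (x + real k)^j) = 0"
proof (induction m arbitrary: j x)
  case 0 then show ?case by simp
next
  case (Suc m)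
  have "(\<Sum>k\<le>Suc m. real (Suc m choose k) * (-1)^k * (x + real k)^j) =
        (\<Sum>k\<le>m. real (m choose k) * (-1)^k * ((x + real k)^j - (x + real (Suc k))^j))"
    by (rule fd_step)
  also have "\<dots> = (\<Sum>k\<le>m. real (m choose k) * (-1)^k * (- (\<Sum>i<j. real (j choose i) * (x + real k)^i)))"
  proof (rule sum.cong[OF refl])
    fix k
    have "(x + real (Suc k))^j = ((x + real k) + 1)^j" by (simp add: algebra_simps)
    also have "\<dots> = (\<Sum>i\<le>j. real (j choose i) * (x + real k)^i)"
      by (simp add: binomial_ring mult.commute)
    also have "\<dots> = (\<Sum>i<j. real (j choose i) * (x + real k)^i) + (x + real k)^j"
      by (simp add: lessThan_Suc_atMost[symmetric])
    finally show "real (m choose k) * (-1)^k * ((x + real k)^j - (x + real (Suc k))^j) =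
       real (m choose k) * (-1)^k * (- (\<Sum>i<j. real (j choose i) * (x + real k)^i))" by simp
  qed
  also have "\<dots> = - (\<Sum>i<j. real (j choose i) * (\<Sum>k\<le>m. real (m choose k) * (-1)^k * (x + real k)^i))"
    by (simp add: sum_distrib_left sum_negf sum.swap[of _ "{..<j}"] algebra_simps)
  also have "\<dots> = 0"
    using Suc by (simp)
  finally show ?case .
qed

definition abel_t :: "real \<Rightarrow> nat \<Rightarrow> real" where
  "abel_t x k = (if k = 0 then 1 else x * (x + real k)^(k-1))"

lemma abel_zero:
  assumes "m \<ge> 1"
  shows "(\<Sum>k\<le>m. real (m choose k) * abel_t x k * (- x - real m + real m - real k)^(m-k)) = 0"
proof -
  have "(\<Sum>k\<le>m. real (m choose k) * abel_t x k * (- x - real m + real m - real k)^(m-k))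
      = (\<Sum>k\<le>m. x * (-1)^m * (real (m choose k) * (-1)^k * (x + real k)^(m-1)))"
  proof (rule sum.cong[OF refl])
    fix k assume k: "k \<in> {..m}"
    have s: "(-1::real)^(m-k) = (-1)^m * (-1)^k"
    proof -
      have "(-1::real)^(m-k) = (-1)^(m-k) * ((-1)^k * (-1)^k)"
        by (simp add: power_mult_distrib[symmetric])
      also have "\<dots> = (-1)^(m-k+k) * (-1)^k" by (simp add: power_add)
      finally show ?thesis using k by simp
    qed
    have e: "(- x - real m + real m - real k) = (-1) * (x + real k)" by simp
    show "real (m choose k) * abel_t x k * (- x - real m + real m - real k)^(m-k) =
       x * (-1)^m * (real (m choose k) * (-1)^k * (x + real k)^(m-1))"
    proof (cases "k = 0")
      case True
      have xm: "x * x^(m-1) = x^m" using assms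
        by (metis Suc_diff_1 less_le_trans power_Suc zero_less_one)
      show ?thesis using True unfolding e power_mult_distrib abel_t_def
        by (simp add: xm[symmetric] algebra_simps)
    next
      case False
      then have "(x + real k)^(k-1) * (x + real k)^(m-k) = (x + real k)^(m-1)"
        using k by (simp add: power_add[symmetric])
      then show ?thesis using False
        unfolding e power_mult_distrib s abel_t_def by (simp add: algebra_simps)
    qed
  qed
  also have "\<dots> = x * (-1)^m * (\<Sum>k\<le>m. real (m choose k) * (-1)^k * (x + real k)^(m-1))"
    by (simp add: sum_distrib_left)
  also have "\<dots> = 0" using fd_poly[of "m-1" m x] assms by simp
  finally show ?thesis .
qed

lemma abel:
  "(\<Sum>k\<le>m. real (m choose k) * abel_t x k * (y + real m - real k)^(m-k)) = (x + y + real m)^m"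
proof (induction m arbitrary: y)
  case 0 then show ?case by (simp add: abel_t_def)
next
  case (Suc m)
  define f where "f = (\<lambda>y. \<Sum>k\<le>Suc m. real (Suc m choose k) * abel_t x k * (y + real (Suc m) - real k)^(Suc m-k))"
  define g where "g = (\<lambda>y. (x + y + real (Suc m))^(Suc m))"
  have df: "(f has_real_derivative (\<Sum>k\<le>Suc m. real (Suc m choose k) * abel_t x k *
        (real (Suc m - k) * (y + real (Suc m) - real k)^(Suc m - k - 1)))) (at y)" for y
    unfolding f_def by (auto intro!: derivative_eq_intros sum.cong simp: mult.assoc)
  have dsum: "(\<Sum>k\<le>Suc m. real (Suc m choose k) * abel_t x k *
        (real (Suc m - k) * (y + real (Suc m) - real k)^(Suc m - k - 1))) = real (Suc m) * (x + y + real (Suc m))^m" for y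
  proof -
    have "(\<Sum>k\<le>Suc m. real (Suc m choose k) * abel_t x k *
        (real (Suc m - k) * (y + real (Suc m) - real k)^(Suc m - k - 1)))
      = (\<Sum>k\<le>m. real (Suc m choose k) * abel_t x k *
        (real (Suc m - k) * (y + real (Suc m) - real k)^(Suc m - k - 1)))"
      by (subst sum.atMost_Suc) (simp only: diff_self_eq_0 of_nat_0 mult_zero_left mult_zero_right add_0_right)
    also have "\<dots> = (\<Sum>k\<le>m. real (Suc m) * (real (m choose k) * abel_t x k * ((y+1) + real m - real k)^(m-k)))"
    proof (rule sum.cong[OF refl])
      fix k assume k: "k \<in> {..m}"
      have b: "real (Suc m - k) * real (Suc m choose k) = real (Suc m) * real (m choose k)"
        using binomial_absorb_comp[of "Suc m" k] by (metis diff_Suc_1 of_nat_mult)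
      have e: "y + real (Suc m) - real k = (y+1) + real m - real k" by simp
      have e2: "Suc m - k - 1 = m - k" by simp
      show "real (Suc m choose k) * abel_t x k * (real (Suc m - k) * (y + real (Suc m) - real k)^(Suc m - k - 1))
          = real (Suc m) * (real (m choose k) * abel_t x k * ((y+1) + real m - real k)^(m-k))"
        unfolding e e2
      proof -
        let ?P = "((y+1) + real m - real k)^(m-k)"
        have "real (Suc m choose k) * abel_t x k * (real (Suc m - k) * ?P)
            = abel_t x k * ?P * (real (Suc m - k) * real (Suc m choose k))" by (simp only: mult_ac)
        also have "\<dots> = abel_t x k * ?P * (real (Suc m) * real (m choose k))" using b by simp
        also have "\<dots> = real (Suc m) * (real (m choose k) * abel_t x k * ?P)" by (simp only: mult_ac)
        finally show "real (Suc m choose k) * abel_t x k * (real (Suc m - k) * ?P)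
            = real (Suc m) * (real (m choose k) * abel_t x k * ?P)" .
      qed
    qed
    also have "\<dots> = real (Suc m) * (x + (y+1) + real m)^m"
      by (simp add: sum_distrib_left[symmetric] Suc.IH)
    finally show ?thesis by (simp add: algebra_simps)
  qed
  have dg: "(g has_real_derivative (real (Suc m) * (x + y + real (Suc m))^m)) (at y)" for y
    unfolding g_def by (auto intro!: derivative_eq_intros simp del: power_Suc)
  have d0: "\<forall>y. ((\<lambda>y. f y - g y) has_real_derivative 0) (at y)"
  proof
    fix y show "((\<lambda>y. f y - g y) has_real_derivative 0) (at y)"
      using DERIV_diff[OF df[of y] dg[of y]] dsum[of y] by simp
  qed
  have "f y - g y = f (- x - real (Suc m)) - g (- x - real (Suc m))"
    by (rule DERIV_isconst_all[OF d0])
  also have "\<dots> = 0"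
    using abel_zero[of "Suc m" x] unfolding f_def g_def by simp
  finally show ?case unfolding f_def g_def by simp
qed

lemma sum_reflect_lessThan:
  "(\<Sum>a<(l::nat). f a) = (\<Sum>a<l. f (l - 1 - a))"
  by (rule sum.reindex_bij_witness[where i="\<lambda>a. l-1-a" and j="\<lambda>a. l-1-a"]) auto

lemma sum_reflect_atMost:
  "(\<Sum>a\<le>(m::nat). f a) = (\<Sum>a\<le>m. f (m - a))"
  by (rule sum.reindex_bij_witness[where i="\<lambda>a. m-a" and j="\<lambda>a. m-a"]) auto

lemma abel_special:
  "(\<Sum>a\<le>m. real (m choose a) * real ((a+1)^a) * real ((m-a+1)^(m-a-1))) = real ((m+2)^m)"
proof -
  have "(\<Sum>a\<le>m. real (m choose a) * real ((a+1)^a) * real ((m-a+1)^(m-a-1)))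
      = (\<Sum>k\<le>m. real (m choose (m-k)) * real ((m-k+1)^(m-k)) * real ((m-(m-k)+1)^(m-(m-k)-1)))"
    by (rule sum_reflect_atMost)
  also have "\<dots> = (\<Sum>k\<le>m. real (m choose k) * abel_t 1 k * (1 + real m - real k)^(m-k))"
  proof (rule sum.cong[OF refl])
    fix k assume k: "k \<in> {..m}"
    then have k': "k \<le> m" by simp
    have t: "abel_t 1 k = real ((k+1)^(k-1))" by (simp add: abel_t_def add.commute)
    have c: "m choose (m-k) = m choose k" using k' by (simp add: binomial_symmetric[symmetric])
    have e: "m - (m-k) = k" using k' by simp
    have e2: "real (m-k+1) = 1 + real m - real k" using k' by simp
    show "real (m choose (m-k)) * real ((m-k+1)^(m-k)) * real ((m-(m-k)+1)^(m-(m-k)-1))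
        = real (m choose k) * abel_t 1 k * (1 + real m - real k)^(m-k)"
      unfolding c e t of_nat_power e2 by (simp add: mult_ac)
  qed
  also have "\<dots> = (1 + 1 + real m)^m" by (rule abel)
  also have "\<dots> = real ((m+2)^m)" by simp
  finally show ?thesis .
qed

definition phi :: "nat \<Rightarrow> real" where
  "phi l = real ((l+1)^(l-1)) / fact l"

lemma phi_mult: "phi a * (1 + real a) = real ((a+1)^a) / fact a"
proof (cases a)
  case 0 then show ?thesis by (simp add: phi_def)
next
  case (Suc b) then show ?thesis by (simp add: phi_def field_simps)
qed

lemma block_identity:
  assumes "l \<ge> 1"
  shows "(\<Sum>a<l. phi a * phi (l-1-a) * (1 + real a)) = real l * phi l"
proof -
  obtain m where l: "l = Suc m" using assms by (cases l) auto
  have "(\<Sum>a<l. phi a * phi (l-1-a) * (1 + real a))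
      = (\<Sum>a\<le>m. (real (m choose a) * real ((a+1)^a) * real ((m-a+1)^(m-a-1))) / fact m)"
  proof (rule sum.cong)
    show "{..<l} = {..m}" using l by auto
  next
    fix a assume "a \<in> {..m}"
    then have a: "a \<le> m" by simp
    have "phi a * phi (l-1-a) * (1 + real a) = (phi a * (1 + real a)) * phi (m-a)"
      using l by (simp add: mult_ac)
    also have "\<dots> = real ((a+1)^a) / fact a * (real ((m-a+1)^(m-a-1)) / fact (m-a))"
      unfolding phi_mult by (simp add: phi_def)
    also have "\<dots> = (real (m choose a) * real ((a+1)^a) * real ((m-a+1)^(m-a-1))) / fact m"
      using binomial_fact[OF a, where 'a=real] by (simp add: field_simps)
    finally show "phi a * phi (l-1-a) * (1 + real a) =
       (real (m choose a) * real ((a+1)^a) * real ((m-a+1)^(m-a-1))) / fact m" .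
  qed
  also have "\<dots> = real ((m+2)^m) / fact m"
    by (simp only: sum_divide_distrib[symmetric] abel_special)
  also have "\<dots> = real l * phi l"
  proof -
    have f: "(fact l :: real) = real l * fact m" using l by simp
    have p: "real ((l+1)^(l-1)) = real ((m+2)^m)" using l by simp
    have "real l > 0" using l by simp
    then show ?thesis unfolding phi_def f p by simp
  qed
  finally show ?thesis .
qed



definition st :: "real \<Rightarrow> nat \<Rightarrow> nat \<Rightarrow> real" where
  "st p m i = (if i = Suc m then p else 0) + (if Suc i = m then 1 - p else 0)"

fun qw :: "nat \<Rightarrow> real \<Rightarrow> nat \<Rightarrow> nat \<Rightarrow> nat \<Rightarrow> real" where
  "qw a p 0 j i = (if i = j then 1 else 0)"
| "qw a p (Suc k) j i = (\<Sum>m\<in>{1..a}. qw a p k j m * st p m i)"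

definition Qm :: "nat \<Rightarrow> real \<Rightarrow> nat \<Rightarrow> nat \<Rightarrow> real" where
  "Qm a p k j = (\<Sum>m\<in>{1..a}. qw a p k j m)"

context
  fixes a :: nat and p :: real
  assumes p0: "0 \<le> p" and p1: "p \<le> 1"
begin

lemma st_nonneg: "st p m i \<ge> 0"
  using p0 p1 by (simp add: st_def)

lemma qw_nonneg: "qw a p k j i \<ge> 0"
  by (induction k arbitrary: i) (auto intro!: sum_nonneg mult_nonneg_nonneg st_nonneg)

lemma Qm_nonneg: "Qm a p k j \<ge> 0"
  unfolding Qm_def by (auto intro!: sum_nonneg qw_nonneg)

lemma qw_CK:
  assumes "y \<in> {1..a}"
  shows "qw a p (k + m) j y = (\<Sum>z\<in>{1..a}. qw a p k j z * qw a p m z y)"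
  using assms
proof (induction m arbitrary: y)
  case 0
  then show ?case by (simp add: if_distrib[where f="\<lambda>x. _ * x"] sum.delta cong: if_cong)
next
  case (Suc m)
  have "qw a p (k + Suc m) j y = (\<Sum>w\<in>{1..a}. qw a p (k+m) j w * st p w y)" by simp
  also have "\<dots> = (\<Sum>w\<in>{1..a}. (\<Sum>z\<in>{1..a}. qw a p k j z * qw a p m z w) * st p w y)"
    by (rule sum.cong[OF refl]) (simp add: Suc.IH)
  also have "\<dots> = (\<Sum>z\<in>{1..a}. qw a p k j z * (\<Sum>w\<in>{1..a}. qw a p m z w * st p w y))"
    by (simp add: sum_distrib_left sum_distrib_right mult.assoc) (rule sum.swap)
  also have "\<dots> = (\<Sum>z\<in>{1..a}. qw a p k j z * qw a p (Suc m) z y)" by simp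
  finally show ?case .
qed

lemma qw_one: "z \<in> {1..a} \<Longrightarrow> qw a p 1 z w = st p z w"
  by (simp add: if_distrib[where f="\<lambda>x. x * _"] sum.delta cong: if_cong)

lemma qw_first:
  assumes "z \<in> {1..a}" "y \<in> {1..a}"
  shows "qw a p (Suc m) z y = (\<Sum>w\<in>{1..a}. st p z w * qw a p m w y)"
  using qw_CK[OF assms(2), of 1 m z] qw_one[OF assms(1)] by simp

lemma Q_first:
  assumes "z \<in> {1..a}"
  shows "Qm a p (Suc m) z = (\<Sum>w\<in>{1..a}. st p z w * Qm a p m w)"
proof -
  have "Qm a p (Suc m) z = (\<Sum>y\<in>{1..a}. \<Sum>w\<in>{1..a}. st p z w * qw a p m w y)"
    unfolding Qm_def by (rule sum.cong[OF refl], rule qw_first[OF assms], simp)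
  also have "\<dots> = (\<Sum>w\<in>{1..a}. \<Sum>y\<in>{1..a}. st p z w * qw a p m w y)" by (rule sum.swap)
  also have "\<dots> = (\<Sum>w\<in>{1..a}. st p z w * Qm a p m w)" by (simp only: Qm_def sum_distrib_left)
  finally show ?thesis .
qed

lemma Q_CK:
  "Qm a p (k + m) j = (\<Sum>z\<in>{1..a}. qw a p k j z * Qm a p m z)"
proof -
  have "Qm a p (k + m) j = (\<Sum>y\<in>{1..a}. \<Sum>z\<in>{1..a}. qw a p k j z * qw a p m z y)"
    unfolding Qm_def by (rule sum.cong[OF refl], rule qw_CK, simp)
  also have "\<dots> = (\<Sum>z\<in>{1..a}. \<Sum>y\<in>{1..a}. qw a p k j z * qw a p m z y)" by (rule sum.swap)
  also have "\<dots> = (\<Sum>z\<in>{1..a}. qw a p k j z * Qm a p m z)" by (simp only: Qm_def sum_distrib_left)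
  finally show ?thesis .
qed

lemma st_sum:
  assumes "z \<in> {1..a}"
  shows "(\<Sum>w\<in>{1..a}. st p z w * f w) =
     (if Suc z \<le> a then p * f (Suc z) else 0) + (if 2 \<le> z then (1-p) * f (z-1) else 0)"
proof -
  have "(\<Sum>w\<in>{1..a}. st p z w * f w) =
     (\<Sum>w\<in>{1..a}. (if w = Suc z then p * f w else 0)) + (\<Sum>w\<in>{1..a}. (if w = z - 1 then (1-p) * f w else 0))"
    unfolding sum.distrib[symmetric]
    using assms by (intro sum.cong[OF refl]) (auto simp: st_def)
  also have "\<dots> = (if Suc z \<in> {1..a} then p * f (Suc z) else 0) + (if z - 1 \<in> {1..a} then (1-p) * f (z-1) else 0)"
    by (simp only: sum.delta finite_atLeastAtMost)
  also have "\<dots> = (if Suc z \<le> a then p * f (Suc z) else 0) + (if 2 \<le> z then (1-p) * f (z-1) else 0)"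
  proof -
    have "(Suc z \<in> {1..a}) = (Suc z \<le> a)" "(z - 1 \<in> {1..a}) = (2 \<le> z)" using assms by auto
    then show ?thesis by simp
  qed
  finally show ?thesis .
qed

lemma st_rowsum:
  assumes "z \<in> {1..a}"
  shows "(\<Sum>i\<in>{0..Suc a}. st p z i) = 1"
proof -
  have "(\<Sum>i\<in>{0..Suc a}. st p z i) =
     (\<Sum>i\<in>{0..Suc a}. (if i = Suc z then p else 0)) + (\<Sum>i\<in>{0..Suc a}. (if i = z - 1 then 1 - p else 0))"
    unfolding sum.distrib[symmetric]
    using assms by (intro sum.cong[OF refl]) (auto simp: st_def)
  also have "\<dots> = (if Suc z \<in> {0..Suc a} then p else 0) + (if z - 1 \<in> {0..Suc a} then 1 - p else 0)"
    by (simp only: sum.delta finite_atLeastAtMost)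
  also have "\<dots> = 1" using assms by auto
  finally show ?thesis .
qed

lemma if_bounds:
  assumes "\<forall>w\<in>{1..a}. Qm a p m w \<le> 1" "z \<in> {1..a}"
  shows "(if Suc z \<le> a then p * Qm a p m (Suc z) else 0) \<le> p"
    "(if 2 \<le> z then (1-p) * Qm a p m (z-1) else 0) \<le> 1 - p"
proof -
  show "(if Suc z \<le> a then p * Qm a p m (Suc z) else 0) \<le> p"
  proof (cases "Suc z \<le> a")
    case True
    then have "Qm a p m (Suc z) \<le> 1" using assms by auto
    then show ?thesis using True p0 by (simp add: mult_left_le)
  qed (use p0 in simp)
  show "(if 2 \<le> z then (1-p) * Qm a p m (z-1) else 0) \<le> 1 - p"
  proof (cases "2 \<le> z")
    case True
    then have "z - 1 \<in> {1..a}" using assms by auto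
    then have "Qm a p m (z-1) \<le> 1" using assms by blast
    then show ?thesis using True p1 by (simp add: mult_left_le)
  qed (use p1 in simp)
qed

lemma Q_le1: "z \<in> {1..a} \<Longrightarrow> Qm a p m z \<le> 1"
proof (induction m arbitrary: z)
  case 0 then show ?case by (simp add: Qm_def if_distrib sum.delta cong: if_cong)
next
  case (Suc m)
  have "Qm a p (Suc m) z = (if Suc z \<le> a then p * Qm a p m (Suc z) else 0) + (if 2 \<le> z then (1-p) * Qm a p m (z-1) else 0)"
    using Q_first[OF Suc.prems] st_sum[OF Suc.prems] by simp
  also have "\<dots> \<le> p + (1-p)"
    using if_bounds[OF _ Suc.prems, of m] Suc.IH by (intro add_mono) auto
  finally show ?case by simp
qed

lemma Q_right:
  "z \<in> {1..a} \<Longrightarrow> a + 1 \<le> z + d \<Longrightarrow> Qm a p d z \<le> 1 - p^d"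
proof (induction d arbitrary: z)
  case 0 then show ?case by simp
next
  case (Suc d)
  have "Qm a p (Suc d) z = (if Suc z \<le> a then p * Qm a p d (Suc z) else 0) + (if 2 \<le> z then (1-p) * Qm a p d (z-1) else 0)"
    using Q_first[OF Suc.prems(1)] st_sum[OF Suc.prems(1)] by simp
  also have "\<dots> \<le> 1 - p^(Suc d)"
  proof (cases "Suc z \<le> a")
    case True
    then have "Qm a p d (Suc z) \<le> 1 - p^d" using Suc.IH[of "Suc z"] Suc.prems by simp
    then have "p * Qm a p d (Suc z) \<le> p * (1 - p^d)" using p0 by (rule mult_left_mono)
    moreover have "(if 2 \<le> z then (1-p) * Qm a p d (z-1) else 0) \<le> 1 - p"
      using if_bounds[OF _ Suc.prems(1), of d] Q_le1 by auto
    ultimately show ?thesis using True by (simp add: algebra_simps)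
  next
    case False
    have "(if 2 \<le> z then (1-p) * Qm a p d (z-1) else 0) \<le> 1 - p"
      using if_bounds[OF _ Suc.prems(1), of d] Q_le1 by auto
    moreover have "p^(Suc d) \<le> p" using p0 p1 by (simp add: mult_left_le power_le_one)
    ultimately show ?thesis using False by simp
  qed
  finally show ?case .
qed

lemma Q_left:
  "z \<in> {1..a} \<Longrightarrow> z \<le> d \<Longrightarrow> Qm a p d z \<le> 1 - (1-p)^d"
proof (induction d arbitrary: z)
  case 0 then show ?case by simp
next
  case (Suc d)
  have "Qm a p (Suc d) z = (if Suc z \<le> a then p * Qm a p d (Suc z) else 0) + (if 2 \<le> z then (1-p) * Qm a p d (z-1) else 0)"
    using Q_first[OF Suc.prems(1)] st_sum[OF Suc.prems(1)] by simp
  also have "\<dots> \<le> 1 - (1-p)^(Suc d)"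
  proof (cases "2 \<le> z")
    case True
    have "z - 1 \<in> {1..a}" "z - 1 \<le> d" using True Suc.prems by auto
    then have "Qm a p d (z-1) \<le> 1 - (1-p)^d" using Suc.IH[of "z-1"] by blast
    then have "(1-p) * Qm a p d (z-1) \<le> (1-p) * (1 - (1-p)^d)" using p1 by (simp add: mult_left_mono)
    moreover have "(if Suc z \<le> a then p * Qm a p d (Suc z) else 0) \<le> p"
      using if_bounds[OF _ Suc.prems(1), of d] Q_le1 by auto
    ultimately show ?thesis using True by (simp add: algebra_simps)
  next
    case False
    have "(if Suc z \<le> a then p * Qm a p d (Suc z) else 0) \<le> p"
      using if_bounds[OF _ Suc.prems(1), of d] Q_le1 by auto
    moreover have "(1-p)^(Suc d) \<le> 1-p" using p0 p1 by (simp add: mult_left_le power_le_one)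
    ultimately show ?thesis using False by simp
  qed
  finally show ?case .
qed

definition theta :: real where "theta = (max p (1-p))^a"

lemma theta_pos: "theta > 0"
  unfolding theta_def by (simp add: max_def)

lemma theta_le1: "theta \<le> 1"
  unfolding theta_def using p0 p1 by (simp add: max_def power_le_one)

lemma Q_a: "z \<in> {1..a} \<Longrightarrow> Qm a p a z \<le> 1 - theta"
  unfolding theta_def using Q_right[of z a] Q_left[of z a] by (auto simp: max_def)

lemma Q_mult: "Qm a p (r * a) j \<le> (1 - theta)^r"
proof (induction r)
  case 0
  show ?case by (auto simp: Qm_def if_distrib sum.delta cong: if_cong)
next
  case (Suc r)
  have "Qm a p (Suc r * a) j = (\<Sum>z\<in>{1..a}. qw a p (r*a) j z * Qm a p a z)"
    using Q_CK[of "r*a" a j] by (simp add: add.commute)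
  also have "\<dots> \<le> (\<Sum>z\<in>{1..a}. qw a p (r*a) j z * (1 - theta))"
    by (rule sum_mono) (auto intro!: mult_left_mono Q_a qw_nonneg)
  also have "\<dots> = (1 - theta) * Qm a p (r*a) j" by (simp only: Qm_def sum_distrib_left mult.commute)
  also have "\<dots> \<le> (1 - theta) * (1 - theta)^r"
    using Suc.IH theta_le1 by (simp add: mult_left_mono)
  finally show ?case by simp
qed

lemma mass_step:
  assumes "j \<in> {1..a}"
  shows "qw a p (Suc k) j 0 + qw a p (Suc k) j (Suc a) + Qm a p (Suc k) j = Qm a p k j"
proof -
  have split: "{0..Suc a} = insert 0 (insert (Suc a) {1..a})" by auto
  have "(\<Sum>i\<in>{0..Suc a}. qw a p (Suc k) j i) = (\<Sum>i\<in>{0..Suc a}. \<Sum>m\<in>{1..a}. qw a p k j m * st p m i)"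
    by (simp only: qw.simps)
  also have "\<dots> = (\<Sum>m\<in>{1..a}. \<Sum>i\<in>{0..Suc a}. qw a p k j m * st p m i)" by (rule sum.swap)
  also have "\<dots> = (\<Sum>m\<in>{1..a}. qw a p k j m * (\<Sum>i\<in>{0..Suc a}. st p m i))" by (simp only: sum_distrib_left)
  also have "\<dots> = Qm a p k j" unfolding Qm_def by (rule sum.cong[OF refl]) (subst st_rowsum, auto)
  finally have "(\<Sum>i\<in>{0..Suc a}. qw a p (Suc k) j i) = Qm a p k j" .
  moreover have "(\<Sum>i\<in>{0..Suc a}. qw a p (Suc k) j i) = qw a p (Suc k) j 0 + qw a p (Suc k) j (Suc a) + Qm a p (Suc k) j"
    unfolding split Qm_def by (simp add: add.assoc del: qw.simps)
  ultimately show ?thesis by simp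
qed

lemma Q_mono_step: "j \<in> {1..a} \<Longrightarrow> Qm a p (Suc k) j \<le> Qm a p k j"
  using mass_step[of j k] qw_nonneg[of "Suc k" j 0] qw_nonneg[of "Suc k" j "Suc a"] by linarith

lemma Q_mono: "j \<in> {1..a} \<Longrightarrow> Qm a p (i + d) j \<le> Qm a p i j"
  by (induction d) (auto intro: order_trans[OF Q_mono_step])

lemma Q_lim: "j \<in> {1..a} \<Longrightarrow> (\<lambda>k. Qm a p k j) \<longlonglongrightarrow> 0"
proof (rule LIMSEQ_I)
  fix r :: real assume j: "j \<in> {1..a}" and r: "0 < r"
  have "(\<lambda>n. (1 - theta)^n) \<longlonglongrightarrow> 0"
    using theta_pos theta_le1 by (intro LIMSEQ_power_zero) auto
  from LIMSEQ_D[OF this r] obtain N where N: "\<And>n. n \<ge> N \<Longrightarrow> norm ((1-theta)^n - 0) < r" by blast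
  have "\<forall>k\<ge>N * a. norm (Qm a p k j - 0) < r"
  proof (intro allI impI)
    fix k assume "k \<ge> N * a"
    then obtain d where "k = N * a + d" using le_Suc_ex by blast
    then have "Qm a p k j \<le> Qm a p (N*a) j" using Q_mono[OF j] by simp
    also have "\<dots> \<le> (1-theta)^N" by (rule Q_mult)
    also have "\<dots> < r" using N[of N] theta_le1 by simp
    finally show "norm (Qm a p k j - 0) < r" using Qm_nonneg by simp
  qed
  then show "\<exists>no. \<forall>k\<ge>no. norm (Qm a p k j - 0) < r" by blast
qed

lemma absorb_partial:
  assumes "j \<in> {1..a}"
  shows "(\<Sum>k<Suc K. qw a p k j 0 + qw a p k j (Suc a)) = 1 - Qm a p K j"
proof (induction K)
  case 0 then show ?case using assms by (simp add: Qm_def if_distrib sum.delta cong: if_cong)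
next
  case (Suc K)
  then show ?case using mass_step[OF assms, of K] by (simp del: qw.simps)
qed

lemma absorb_sums:
  assumes "j \<in> {1..a}"
  shows "(\<lambda>k. qw a p k j 0 + qw a p k j (Suc a)) sums 1"
proof -
  have "(\<lambda>K. 1 - Qm a p K j) \<longlonglongrightarrow> 1 - 0"
    by (intro tendsto_diff tendsto_const Q_lim assms)
  then have "(\<lambda>K. \<Sum>k<Suc K. qw a p k j 0 + qw a p k j (Suc a)) \<longlonglongrightarrow> 1"
    using absorb_partial[OF assms] by simp
  then show ?thesis unfolding sums_def by (rule LIMSEQ_imp_Suc)
qed

lemma absorb:
  assumes "j \<in> {1..a}"
  shows "summable (\<lambda>k. qw a p k j 0)" "summable (\<lambda>k. qw a p k j (Suc a))"
    "(\<Sum>k. qw a p k j 0) + (\<Sum>k. qw a p k j (Suc a)) = 1"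
proof -
  have s: "summable (\<lambda>k. qw a p k j 0 + qw a p k j (Suc a))"
    using absorb_sums[OF assms] by (rule sums_summable)
  show s0: "summable (\<lambda>k. qw a p k j 0)"
    by (rule summable_comparison_test'[OF s]) (auto simp: qw_nonneg)
  show s1: "summable (\<lambda>k. qw a p k j (Suc a))"
    by (rule summable_comparison_test'[OF s]) (auto simp: qw_nonneg)
  have "(\<Sum>k. qw a p k j 0 + qw a p k j (Suc a)) = 1" using absorb_sums[OF assms] by (rule sums_unique[symmetric])
  then show "(\<Sum>k. qw a p k j 0) + (\<Sum>k. qw a p k j (Suc a)) = 1"
    using suminf_add[OF s0 s1] by simp
qed

end



definition rot :: "nat \<Rightarrow> nat \<Rightarrow> nat \<Rightarrow> nat" where "rot n c i = (c + i) mod n"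
definition cdist :: "nat \<Rightarrow> nat \<Rightarrow> nat \<Rightarrow> nat" where "cdist n c z = (z + n - c) mod n"
definition lenf :: "nat \<Rightarrow> nat set \<Rightarrow> nat \<Rightarrow> nat" where "lenf n X y = (LEAST d. rot n y (Suc d) \<in> X)"

context
  fixes n :: nat
  assumes npos: "n > 0"
begin

lemma rot_lt: "rot n c i < n"
  using npos by (simp add: rot_def)

lemma cdist_lt: "cdist n c z < n"
  using npos by (simp add: cdist_def)

lemma rot_rot: "rot n (rot n c i) j = rot n c (i + j)"
  by (simp add: rot_def mod_add_left_eq add.assoc)

lemma rot_mod: "rot n c (i mod n) = rot n c i"
  by (simp add: rot_def mod_add_right_eq)

lemma rot_0: "c < n \<Longrightarrow> rot n c 0 = c"
  by (simp add: rot_def)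

lemma rot_n: "c < n \<Longrightarrow> rot n c n = c"
  by (simp add: rot_def)

lemma rot_cdist: "c < n \<Longrightarrow> z < n \<Longrightarrow> rot n c (cdist n c z) = z"
proof -
  assume c: "c < n" and z: "z < n"
  have "rot n c (cdist n c z) = (c + (z + n - c)) mod n"
    by (simp add: rot_def cdist_def mod_add_right_eq)
  also have "c + (z + n - c) = z + n" using c by simp
  finally show ?thesis using z by simp
qed

lemma cdist_rot: "c < n \<Longrightarrow> i < n \<Longrightarrow> cdist n c (rot n c i) = i"
proof -
  assume c: "c < n" and i: "i < n"
  have "cdist n c (rot n c i) = ((c + i) mod n + (n - c)) mod n"
    using c by (simp add: cdist_def rot_def add_diff_assoc)
  also have "\<dots> = (c + i + (n - c)) mod n" by (simp add: mod_add_left_eq)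
  also have "c + i + (n - c) = i + n" using c by simp
  finally show ?thesis using i by simp
qed

lemma rot_inj: "c < n \<Longrightarrow> i < n \<Longrightarrow> i' < n \<Longrightarrow> rot n c i = rot n c i' \<Longrightarrow> i = i'"
  by (metis cdist_rot)

lemma cdist_zero: "c < n \<Longrightarrow> z < n \<Longrightarrow> cdist n c z = 0 \<Longrightarrow> z = c"
  by (metis rot_0 rot_cdist)

lemma cdist_add:
  assumes "c < n" "c' < n" "z < n"
  shows "cdist n c z = (cdist n c c' + cdist n c' z) mod n"
proof -
  have "rot n c (cdist n c c' + cdist n c' z) = z"
    using assms by (metis rot_cdist rot_rot)
  then have "rot n c ((cdist n c c' + cdist n c' z) mod n) = z" by (simp add: rot_mod)
  then have "cdist n c z = cdist n c (rot n c ((cdist n c c' + cdist n c' z) mod n))" by simp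
  also have "\<dots> = (cdist n c c' + cdist n c' z) mod n"
    using assms npos by (intro cdist_rot) auto
  finally show ?thesis .
qed

context
  fixes X :: "nat set"
  assumes Xsub: "X \<subseteq> {0..<n}"
begin

lemma lenf_ex: "y \<in> X \<Longrightarrow> rot n y (Suc (n - 1)) \<in> X"
  using npos Xsub by (auto simp: rot_def)

lemma lenf_in: "y \<in> X \<Longrightarrow> rot n y (Suc (lenf n X y)) \<in> X"
  unfolding lenf_def by (rule LeastI_ex) (use lenf_ex in blast)

lemma lenf_le: "y \<in> X \<Longrightarrow> lenf n X y \<le> n - 1"
  unfolding lenf_def by (rule Least_le) (rule lenf_ex)

lemma lenf_lt: "y \<in> X \<Longrightarrow> lenf n X y < n"
  using lenf_le npos by fastforce

lemma lenf_notin: "y \<in> X \<Longrightarrow> d < lenf n X y \<Longrightarrow> rot n y (Suc d) \<notin> X"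
  unfolding lenf_def by (rule not_less_Least)

lemma lenf_eqI: "rot n y (Suc L) \<in> X \<Longrightarrow> (\<And>d. d < L \<Longrightarrow> rot n y (Suc d) \<notin> X) \<Longrightarrow> lenf n X y = L"
  unfolding lenf_def by (rule Least_equality) (auto simp: not_less[symmetric])

lemma blk_notin: "c \<in> X \<Longrightarrow> i \<in> {1..lenf n X c} \<Longrightarrow> rot n c i \<notin> X"
  using lenf_notin[of c "i - 1"] by (cases i) auto

lemma X_lt: "c \<in> X \<Longrightarrow> c < n"
  using Xsub by auto

lemma blk_disj:
  assumes c: "c \<in> X" and c': "c' \<in> X" and i: "i \<in> {1..lenf n X c}" and i': "i' \<in> {1..lenf n X c'}"
    and eq: "rot n c i = rot n c' i'"
  shows "c = c'"
proof (rule ccontr)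
  assume ne: "c \<noteq> c'"
  have cn: "c < n" "c' < n" using c c' X_lt by auto
  have il: "i < n" "i' < n" using i i' lenf_lt[OF c] lenf_lt[OF c'] by auto
  define e where "e = cdist n c c'"
  have e0: "e \<noteq> 0" using cdist_zero[OF cn] ne e_def by auto
  have en: "e < n" using cdist_lt e_def by simp
  have c'e: "c' = rot n c e" using rot_cdist[OF cn] e_def by simp
  have ebig: "e > lenf n X c"
  proof (rule ccontr)
    assume "\<not> e > lenf n X c"
    then have "e \<in> {1..lenf n X c}" using e0 by auto
    then have "rot n c e \<notin> X" by (rule blk_notin[OF c])
    then show False using c' c'e by simp
  qed
  have z: "rot n c i < n" by (rule rot_lt)
  have "cdist n c (rot n c i) = (e + cdist n c' (rot n c i)) mod n"
    using cdist_add[OF cn z] e_def by simp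
  then have "i = (e + i') mod n"
    using cdist_rot[OF cn(1) il(1)] cdist_rot[OF cn(2) il(2)] eq by simp
  moreover have "i < e" using i ebig by auto
  ultimately have big: "e + i' \<ge> n" and ieq: "i = e + i' - n"
    using en il by (auto simp: not_le mod_if split: if_splits)
  have "rot n c' (n - e) = rot n c (e + (n - e))" using c'e rot_rot by simp
  also have "\<dots> = c" using en rot_n[OF cn(1)] by simp
  finally have "rot n c' (n - e) = c" .
  moreover have "n - e \<in> {1..lenf n X c'}" using i i' ieq big en by auto
  ultimately show False using blk_notin[OF c'] c by metis
qed

lemma blk_cover:
  assumes ne: "X \<noteq> {}" and z: "z < n" "z \<notin> X"
  shows "\<exists>c\<in>X. \<exists>i\<in>{1..lenf n X c}. z = rot n c i"
proof -
  define d0 where "d0 = (LEAST d. \<exists>c\<in>X. cdist n c z = d)"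
  have "\<exists>c\<in>X. cdist n c z = d0"
    unfolding d0_def by (rule LeastI_ex) (use ne in blast)
  then obtain c where c: "c \<in> X" and cd: "cdist n c z = d0" by blast
  have mn: "\<And>c'. c' \<in> X \<Longrightarrow> d0 \<le> cdist n c' z"
    unfolding d0_def by (rule Least_le) blast
  have cn: "c < n" using c X_lt by simp
  have zc: "z = rot n c d0" using rot_cdist[OF cn z(1)] cd by simp
  have d00: "d0 \<noteq> 0"
  proof
    assume "d0 = 0"
    then have "z = c" using zc rot_0[OF cn] by simp
    then show False using z c by simp
  qed
  have "d0 \<le> lenf n X c"
  proof (rule ccontr)
    assume "\<not> d0 \<le> lenf n X c"
    then have lt: "lenf n X c < d0" by simp
    define s where "s = Suc (lenf n X c)"
    define c'' where "c'' = rot n c s"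
    have c''X: "c'' \<in> X" using lenf_in[OF c] c''_def s_def by simp
    have sn: "s < n" using lt cdist_lt[of c z] cd s_def by simp
    have c''n: "c'' < n" using rot_lt c''_def by simp
    have "cdist n c c'' = s" using cdist_rot[OF cn sn] c''_def by simp
    then have "d0 = (s + cdist n c'' z) mod n" using cdist_add[OF cn c''n z(1)] cd by simp
    moreover have "d0 \<le> cdist n c'' z" using mn[OF c''X] .
    moreover have "cdist n c'' z < n" by (rule cdist_lt)
    moreover have "s > 0" using s_def by simp
    moreover have "s \<le> d0" using lt s_def by simp
    ultimately show False using sn by (auto simp: mod_if split: if_splits)
  qed
  then have "d0 \<in> {1..lenf n X c}" using d00 by auto
  then show ?thesis using c zc by blast
qed

lemma blk_bij:
  assumes ne: "X \<noteq> {}"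
  shows "bij_betw (\<lambda>(c,i). rot n c i) (Sigma X (\<lambda>c. {1..lenf n X c})) ({0..<n} - X)"
proof (rule bij_betwI')
  fix u v assume u: "u \<in> Sigma X (\<lambda>c. {1..lenf n X c})" and v: "v \<in> Sigma X (\<lambda>c. {1..lenf n X c})"
  obtain c i where ui: "u = (c,i)" "c \<in> X" "i \<in> {1..lenf n X c}" using u by auto
  obtain c' i' where vi: "v = (c',i')" "c' \<in> X" "i' \<in> {1..lenf n X c'}" using v by auto
  show "((case u of (c,i) \<Rightarrow> rot n c i) = (case v of (c,i) \<Rightarrow> rot n c i)) = (u = v)"
  proof
    assume eq: "(case u of (c,i) \<Rightarrow> rot n c i) = (case v of (c,i) \<Rightarrow> rot n c i)"
    then have "rot n c i = rot n c' i'" using ui vi by simp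
    moreover have cc: "c = c'" using blk_disj[OF ui(2) vi(2) ui(3) vi(3)] calculation by simp
    ultimately have "i = i'" using rot_inj[of c i i'] X_lt[OF ui(2)] lenf_lt[OF ui(2)] ui(3) vi(3) by auto
    then show "u = v" using cc ui vi by simp
  qed simp
next
  fix u assume u: "u \<in> Sigma X (\<lambda>c. {1..lenf n X c})"
  then obtain c i where ui: "u = (c,i)" "c \<in> X" "i \<in> {1..lenf n X c}" by auto
  show "(case u of (c,i) \<Rightarrow> rot n c i) \<in> {0..<n} - X"
    using ui blk_notin[OF ui(2,3)] rot_lt by auto
next
  fix z assume "z \<in> {0..<n} - X"
  then have "z < n" "z \<notin> X" by auto
  then obtain c i where "c \<in> X" "i \<in> {1..lenf n X c}" "z = rot n c i" using blk_cover[OF ne] by blast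
  then show "\<exists>u\<in>Sigma X (\<lambda>c. {1..lenf n X c}). z = (case u of (c,i) \<Rightarrow> rot n c i)"
    by (intro bexI[of _ "(c,i)"]) auto
qed

lemma sum_blocks:
  assumes ne: "X \<noteq> {}"
  shows "(\<Sum>v\<in>{0..<n} - X. f v) = (\<Sum>c\<in>X. \<Sum>i\<in>{1..lenf n X c}. f (rot n c i))"
proof -
  have fin: "finite X" using Xsub finite_subset by blast
  have "(\<Sum>c\<in>X. \<Sum>i\<in>{1..lenf n X c}. f (rot n c i)) = (\<Sum>(c,i)\<in>Sigma X (\<lambda>c. {1..lenf n X c}). f (rot n c i))"
    using fin by (simp add: sum.Sigma)
  also have "\<dots> = (\<Sum>v\<in>{0..<n} - X. f v)"
    using sum.reindex_bij_betw[OF blk_bij[OF ne], of f]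
    by (simp add: case_prod_beta)
  finally show ?thesis by simp
qed

lemma sum_all:
  assumes ne: "X \<noteq> {}"
  shows "(\<Sum>v<n. f v) = (\<Sum>v\<in>X. f v) + (\<Sum>c\<in>X. \<Sum>i\<in>{1..lenf n X c}. f (rot n c i))"
proof -
  have "(\<Sum>v<n. f v) = (\<Sum>v\<in>{0..<n}. f v)" by (simp add: atLeast0LessThan)
  also have "\<dots> = (\<Sum>v\<in>X. f v) + (\<Sum>v\<in>{0..<n} - X. f v)"
    using Xsub by (simp add: sum.subset_diff add.commute)
  finally have h: "(\<Sum>v<n. f v) = (\<Sum>v\<in>X. f v) + (\<Sum>v\<in>{0..<n} - X. f v)" .
  show ?thesis by (simp only: h sum_blocks[OF ne])
qed

lemma sum_lenf:
  assumes ne: "X \<noteq> {}"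
  shows "(\<Sum>c\<in>X. lenf n X c) = n - card X"
proof -
  have "(\<Sum>c\<in>X. lenf n X c) = (\<Sum>c\<in>X. \<Sum>i\<in>{1..lenf n X c}. (1::nat))" by simp
  also have "\<dots> = (\<Sum>v\<in>{0..<n} - X. 1)" using sum_blocks[OF ne, of "\<lambda>_. 1::nat"] by simp
  also have "\<dots> = n - card X" using Xsub by (simp add: card_Diff_subset finite_subset)
  finally show ?thesis .
qed

end
end


context
  fixes n :: nat
  assumes npos: "n > 0"
begin

lemma lenf_insert:
  assumes Xsub: "X \<subseteq> {0..<n}" and y: "y \<in> X" and a: "a < lenf n X y" and x: "x = rot n y (Suc a)"
  shows "lenf n (insert x X) y = a"
    "lenf n (insert x X) x = lenf n X y - 1 - a"
    "\<And>z. z \<in> X \<Longrightarrow> z \<noteq> y \<Longrightarrow> lenf n (insert x X) z = lenf n X z"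
proof -
  have X'sub: "insert x X \<subseteq> {0..<n}" using Xsub x rot_lt[OF npos] by auto
  have yn: "y < n" using y Xsub by auto
  have ln: "lenf n X y < n" using lenf_lt[OF npos Xsub y] .
  show "lenf n (insert x X) y = a"
  proof (rule lenf_eqI[OF npos X'sub])
    show "rot n y (Suc a) \<in> insert x X" using x by simp
  next
    fix d assume d: "d < a"
    have "rot n y (Suc d) \<notin> X" using lenf_notin[OF npos Xsub y] d a by simp
    moreover have "rot n y (Suc d) \<noteq> x"
      using rot_inj[OF npos yn, of "Suc d" "Suc a"] d a ln x by auto
    ultimately show "rot n y (Suc d) \<notin> insert x X" by simp
  qed
  show "lenf n (insert x X) x = lenf n X y - 1 - a"
  proof (rule lenf_eqI[OF npos X'sub])
    have "rot n x (Suc (lenf n X y - 1 - a)) = rot n y (Suc (lenf n X y))"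
      using x a by (simp add: rot_rot[OF npos])
    then show "rot n x (Suc (lenf n X y - 1 - a)) \<in> insert x X"
      using lenf_in[OF npos Xsub y] by simp
  next
    fix d assume d: "d < lenf n X y - 1 - a"
    have e: "rot n x (Suc d) = rot n y (Suc (Suc a + d))" using x by (simp add: rot_rot[OF npos])
    have "rot n y (Suc (Suc a + d)) \<notin> X" using lenf_notin[OF npos Xsub y] d a by simp
    moreover have "rot n y (Suc (Suc a + d)) \<noteq> x"
    proof
      assume h: "rot n y (Suc (Suc a + d)) = x"
      have "Suc (Suc a + d) < n" using d a ln by linarith
      then have "Suc (Suc a + d) = Suc a" using rot_inj[OF npos yn, of "Suc (Suc a + d)" "Suc a"] a ln h x by simp
      then show False by simp
    qed
    ultimately show "rot n x (Suc d) \<notin> insert x X" using e by simp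
  qed
  fix z assume z: "z \<in> X" "z \<noteq> y"
  show "lenf n (insert x X) z = lenf n X z"
  proof (rule lenf_eqI[OF npos X'sub])
    show "rot n z (Suc (lenf n X z)) \<in> insert x X" using lenf_in[OF npos Xsub z(1)] by simp
  next
    fix d assume d: "d < lenf n X z"
    have "rot n z (Suc d) \<notin> X" using lenf_notin[OF npos Xsub z(1) d] .
    moreover have "rot n z (Suc d) \<noteq> x"
    proof
      assume "rot n z (Suc d) = x"
      then have "rot n z (Suc d) = rot n y (Suc a)" using x by simp
      then have "z = y" using blk_disj[OF npos Xsub z(1) y, of "Suc d" "Suc a"] d a by auto
      then show False using z by simp
    qed
    ultimately show "rot n z (Suc d) \<notin> insert x X" by simp
  qed
qed

lemma x_notin:
  assumes Xsub: "X \<subseteq> {0..<n}" and y: "y \<in> X" and a: "a < lenf n X y" and x: "x = rot n y (Suc a)"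
  shows "x \<notin> X"
  using blk_notin[OF npos Xsub y, of "Suc a"] a x by auto

lemma lenf_two:
  assumes Xsub: "X \<subseteq> {0..<n}" and c: "c \<in> X" and w: "w \<in> X" "w \<noteq> c"
  shows "lenf n X c + 2 \<le> n"
proof (rule ccontr)
  assume "\<not> lenf n X c + 2 \<le> n"
  then have big: "lenf n X c \<ge> n - 1" by simp
  have cn: "c < n" "w < n" using c w Xsub by auto
  have "cdist n c w \<noteq> 0" using cdist_zero[OF npos cn] w by auto
  moreover have "cdist n c w < n" using cdist_lt[OF npos] .
  ultimately have "cdist n c w \<in> {1..lenf n X c}" using big by auto
  then have "rot n c (cdist n c w) \<notin> X" using blk_notin[OF npos Xsub c] by blast
  then show False using rot_cdist[OF npos cn] w by simp
qed

lemma walk_step_rot: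
  assumes "c < n" "m \<ge> 1"
  shows "walk_step n p (rot n c m) y =
     (if y = rot n c (Suc m) then p else 0) + (if y = rot n c (m - 1) then 1 - p else 0)"
proof -
  have "(rot n c m + 1) mod n = rot n c (Suc m)"
    by (simp add: rot_def mod_Suc_eq)
  moreover have "(rot n c m + n - 1) mod n = rot n c (m - 1)"
  proof -
    have "rot n c m + n - 1 = rot n c m + (n - 1)" using npos by simp
    then have "(rot n c m + n - 1) mod n = (c + m + (n - 1)) mod n"
      by (simp add: rot_def mod_add_left_eq)
    also have "c + m + (n - 1) = (c + (m - 1)) + n" using assms npos by simp
    finally show ?thesis by (simp add: rot_def)
  qed
  ultimately show ?thesis by (simp add: walk_step_def)
qed

lemma wk_free:
  "v \<notin> Occ \<Longrightarrow> z \<in> Occ \<Longrightarrow> walk_killed n p Occ k v z = 0"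
proof (induction k arbitrary: z)
  case 0 then show ?case by auto
next
  case (Suc k)
  then show ?case by (simp)
qed

lemma wk_free_sum:
  assumes "v \<notin> Occ"
  shows "(\<Sum>k. walk_killed n p Occ k v y) = (if y = v then 1 else 0)"
proof -
  have "(\<lambda>k. walk_killed n p Occ k v y) = (\<lambda>k. if k = 0 then (if y = v then 1 else 0) else 0)"
  proof
    fix k show "walk_killed n p Occ k v y = (if k = 0 then (if y = v then 1 else 0) else 0)"
      using wk_free[OF assms] by (cases k) auto
  qed
  then show ?thesis using sums_unique[OF sums_single[of 0 "\<lambda>_. if y = v then 1 else 0::real"]]
    by simp
qed

lemma wk_block:
  assumes Occ: "Occ \<subseteq> {0..<n}" and c: "c < n" and an: "a + 2 \<le> n"
    and inB: "\<forall>i\<in>{1..a}. rot n c i \<in> Occ" and c0: "c \<notin> Occ" and c1: "rot n c (Suc a) \<notin> Occ"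
    and j: "j \<in> {1..a}"
  shows "(\<forall>i\<le>Suc a. walk_killed n p Occ k (rot n c j) (rot n c i) = qw a p k j i) \<and>
         (\<forall>y<n. (\<forall>i\<le>Suc a. y \<noteq> rot n c i) \<longrightarrow> walk_killed n p Occ k (rot n c j) y = 0)"
proof (induction k)
  case 0
  have "\<forall>i\<le>Suc a. (rot n c i = rot n c j) = (i = j)"
    using rot_inj[OF npos c, of _ j] j an by auto
  then show ?case using j by auto
next
  case (Suc k)
  define B where "B = rot n c ` {1..a}"
  have BO: "B \<subseteq> Occ" using inB B_def by auto
  have finO: "finite Occ" using Occ finite_subset by blast
  have injB: "inj_on (rot n c) {1..a}"
    using rot_inj[OF npos c] an by (auto simp: inj_on_def)
  have step: "walk_killed n p Occ (Suc k) (rot n c j) y =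
      (\<Sum>m\<in>{1..a}. qw a p k j m * walk_step n p (rot n c m) y)" for y
  proof -
    have "walk_killed n p Occ (Suc k) (rot n c j) y =
        (\<Sum>z\<in>Occ. walk_killed n p Occ k (rot n c j) z * walk_step n p z y)" by simp
    also have "\<dots> = (\<Sum>z\<in>B. walk_killed n p Occ k (rot n c j) z * walk_step n p z y)"
    proof (rule sum.mono_neutral_right[OF finO BO])
      show "\<forall>z\<in>Occ - B. walk_killed n p Occ k (rot n c j) z * walk_step n p z y = 0"
      proof
        fix z assume z: "z \<in> Occ - B"
        have "z < n" using z Occ by auto
        moreover have "\<forall>i\<le>Suc a. z \<noteq> rot n c i"
        proof (intro allI impI)
          fix i assume i: "i \<le> Suc a"
          show "z \<noteq> rot n c i"
          proof (cases "i = 0")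
            case True then show ?thesis using z c0 rot_0[OF npos c] by auto
          next
            case False
            show ?thesis
            proof (cases "i = Suc a")
              case True then show ?thesis using z c1 by auto
            next
              case False
              then have "i \<in> {1..a}" using i \<open>i \<noteq> 0\<close> by auto
              then show ?thesis using z B_def by auto
            qed
          qed
        qed
        ultimately show "walk_killed n p Occ k (rot n c j) z * walk_step n p z y = 0"
          using Suc.IH by simp
      qed
    qed
    also have "\<dots> = (\<Sum>m\<in>{1..a}. walk_killed n p Occ k (rot n c j) (rot n c m) * walk_step n p (rot n c m) y)"
      unfolding B_def by (rule sum.reindex[OF injB, unfolded comp_def])
    also have "\<dots> = (\<Sum>m\<in>{1..a}. qw a p k j m * walk_step n p (rot n c m) y)"
      using Suc.IH by (intro sum.cong refl) auto
    finally show ?thesis .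
  qed
  show ?case
  proof
    show "\<forall>i\<le>Suc a. walk_killed n p Occ (Suc k) (rot n c j) (rot n c i) = qw a p (Suc k) j i"
    proof (intro allI impI)
      fix i assume i: "i \<le> Suc a"
      have "(\<Sum>m\<in>{1..a}. qw a p k j m * walk_step n p (rot n c m) (rot n c i)) =
          (\<Sum>m\<in>{1..a}. qw a p k j m * st p m i)"
      proof (intro sum.cong refl)
        fix m assume m: "m \<in> {1..a}"
        have e1: "(rot n c i = rot n c (Suc m)) = (i = Suc m)"
          using rot_inj[OF npos c, of i "Suc m"] i m an by auto
        have e2: "(rot n c i = rot n c (m - 1)) = (Suc i = m)"
          using rot_inj[OF npos c, of i "m - 1"] i m an by auto
        show "qw a p k j m * walk_step n p (rot n c m) (rot n c i) = qw a p k j m * st p m i"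
        proof -
          have m1: "m \<ge> 1" using m by simp
          show ?thesis unfolding walk_step_rot[OF c m1] e1 e2 st_def by simp
        qed
      qed
      then show "walk_killed n p Occ (Suc k) (rot n c j) (rot n c i) = qw a p (Suc k) j i"
        using step by simp
    qed
  next
    show "\<forall>y<n. (\<forall>i\<le>Suc a. y \<noteq> rot n c i) \<longrightarrow> walk_killed n p Occ (Suc k) (rot n c j) y = 0"
    proof (intro allI impI)
      fix y assume y: "y < n" "\<forall>i\<le>Suc a. y \<noteq> rot n c i"
      have "(\<Sum>m\<in>{1..a}. qw a p k j m * walk_step n p (rot n c m) y) = 0"
      proof (intro sum.neutral ballI)
        fix m assume m: "m \<in> {1..a}"
        have "y \<noteq> rot n c (Suc m)" "y \<noteq> rot n c (m - 1)"
          using y(2) m by (auto dest: spec[of _ "Suc m"] spec[of _ "m - 1"])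
        then show "qw a p k j m * walk_step n p (rot n c m) y = 0"
          using m by (simp add: walk_step_rot[OF c])
      qed
      then show "walk_killed n p Occ (Suc k) (rot n c j) y = 0" using step by simp
    qed
  qed
qed

end


definition Rr :: "nat \<Rightarrow> real \<Rightarrow> real" where
  "Rr a p = (\<Sum>j\<in>{1..a}. \<Sum>k. qw a p k j (Suc a))"
definition Ll :: "nat \<Rightarrow> real \<Rightarrow> real" where
  "Ll a p = (\<Sum>j\<in>{1..a}. \<Sum>k. qw a p k j 0)"

lemma RL_sum:
  assumes "0 \<le> p" "p \<le> 1"
  shows "Rr a p + Ll a p = real a"
proof -
  have "Rr a p + Ll a p = (\<Sum>j\<in>{1..a}. (\<Sum>k. qw a p k j 0) + (\<Sum>k. qw a p k j (Suc a)))"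
    by (simp add: Rr_def Ll_def sum.distrib add.commute)
  also have "\<dots> = (\<Sum>j\<in>{1..a}. 1)"
    using absorb(3)[OF assms] by (intro sum.cong refl) auto
  finally show ?thesis by simp
qed

lemma block_RL:
  assumes "0 \<le> p" "p \<le> 1"
  shows "(\<Sum>a<l. phi a * phi (l-1-a) * (1 + Rr a p + Ll (l-1-a) p)) = real l * phi l"
proof (cases "l = 0")
  case True then show ?thesis by simp
next
  case False
  have "(\<Sum>a<l. phi a * phi (l-1-a) * (1 + Rr a p + Ll (l-1-a) p)) =
      (\<Sum>a<l. phi a * phi (l-1-a) * (1 + Rr a p)) + (\<Sum>a<l. phi a * phi (l-1-a) * Ll (l-1-a) p)"
    by (simp add: sum.distrib[symmetric] algebra_simps)
  also have "(\<Sum>a<l. phi a * phi (l-1-a) * Ll (l-1-a) p) = (\<Sum>a<l. phi (l-1-a) * phi a * Ll a p)"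
  proof -
    have "(\<Sum>a<l. phi a * phi (l-1-a) * Ll (l-1-a) p) =
        (\<Sum>a<l. phi (l-1-a) * phi (l-1-(l-1-a)) * Ll (l-1-(l-1-a)) p)"
      by (rule sum_reflect_lessThan)
    also have "\<dots> = (\<Sum>a<l. phi (l-1-a) * phi a * Ll a p)"
      by (intro sum.cong refl) (auto simp: Suc_diff_le)
    finally show ?thesis .
  qed
  also have "(\<Sum>a<l. phi a * phi (l-1-a) * (1 + Rr a p)) + (\<Sum>a<l. phi (l-1-a) * phi a * Ll a p)
      = (\<Sum>a<l. phi a * phi (l-1-a) * (1 + (Rr a p + Ll a p)))"
    by (simp add: sum.distrib[symmetric] algebra_simps)
  also have "\<dots> = (\<Sum>a<l. phi a * phi (l-1-a) * (1 + real a))"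
    using RL_sum[OF assms] by simp
  also have "\<dots> = real l * phi l" using block_identity False by simp
  finally show ?thesis .
qed

context
  fixes n :: nat
  assumes npos: "n > 0"
begin

lemma park_block:
  assumes X'sub: "X' \<subseteq> {0..<n}" and c: "c \<in> X'" and w: "w \<in> X'" "w \<noteq> c" and x: "x \<in> X'"
    and j: "j \<in> {1..lenf n X' c}"
  shows "park_at n p ({0..<n} - X') (rot n c j) x =
    (if c = x then (\<Sum>k. qw (lenf n X' c) p k j 0)
     else if rot n c (Suc (lenf n X' c)) = x then (\<Sum>k. qw (lenf n X' c) p k j (Suc (lenf n X' c)))
     else 0)"
proof -
  define a where "a = lenf n X' c"
  define Occ where "Occ = {0..<n} - X'"
  have cn: "c < n" and xn: "x < n" using c x X'sub by auto
  have Occ: "Occ \<subseteq> {0..<n}" using Occ_def by auto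
  have an: "a + 2 \<le> n" using lenf_two[OF npos X'sub c w] a_def by simp
  have inB: "\<forall>i\<in>{1..a}. rot n c i \<in> Occ"
    using blk_notin[OF npos X'sub c] rot_lt[OF npos] a_def Occ_def by auto
  have c0: "c \<notin> Occ" using c Occ_def by auto
  have c1: "rot n c (Suc a) \<notin> Occ" using lenf_in[OF npos X'sub c] a_def Occ_def by auto
  have ja: "j \<in> {1..a}" using j a_def by simp
  note WB = wk_block[OF npos Occ cn an inB c0 c1 ja, of p]
  have pk: "park_at n p Occ (rot n c j) x = (\<Sum>k. walk_killed n p Occ k (rot n c j) x)"
    using xn x Occ_def by (simp add: park_at_def)
  show ?thesis
  proof (cases "c = x")
    case True
    then have "x = rot n c 0" using rot_0[OF npos cn] by simp
    then have "\<And>k. walk_killed n p Occ k (rot n c j) x = qw a p k j 0" using WB by auto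
    then show ?thesis using pk True a_def Occ_def by simp
  next
    case cx: False
    show ?thesis
    proof (cases "rot n c (Suc a) = x")
      case True
      then have "\<And>k. walk_killed n p Occ k (rot n c j) x = qw a p k j (Suc a)" using WB by auto
      then show ?thesis using pk True cx a_def Occ_def by simp
    next
      case False
      have "\<forall>i\<le>Suc a. x \<noteq> rot n c i"
      proof (intro allI impI)
        fix i assume i: "i \<le> Suc a"
        show "x \<noteq> rot n c i"
        proof (cases "i = 0")
          case True then show ?thesis using cx rot_0[OF npos cn] by auto
        next
          case i0: False
          show ?thesis
          proof (cases "i = Suc a")
            case True then show ?thesis using False by auto
          next
            case False
            then have "i \<in> {1..a}" using i i0 by auto
            then have "rot n c i \<in> Occ" using inB by auto
            then show ?thesis using x Occ_def by auto
          qed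
        qed
      qed
      then have "\<And>k. walk_killed n p Occ k (rot n c j) x = 0" using WB xn by auto
      then show ?thesis using pk False cx a_def Occ_def by simp
    qed
  qed
qed

lemma park_total:
  assumes Xsub: "X \<subseteq> {0..<n}" and y: "y \<in> X" and a: "a < lenf n X y" and x: "x = rot n y (Suc a)"
  shows "(\<Sum>v<n. park_at n p ({0..<n} - insert x X) v x) = 1 + Rr a p + Ll (lenf n X y - 1 - a) p"
proof -
  define X' where "X' = insert x X"
  have xX: "x \<notin> X" using x_notin[OF npos Xsub y a x] .
  have X'sub: "X' \<subseteq> {0..<n}" using Xsub x rot_lt[OF npos] X'_def by auto
  have finX: "finite X" using Xsub finite_subset by blast
  have ne: "X' \<noteq> {}" using X'_def by simp
  have xy: "x \<noteq> y" using xX y by auto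
  note L = lenf_insert[OF npos Xsub y a x]
  have A: "(\<Sum>v\<in>X'. park_at n p ({0..<n} - X') v x) = 1"
  proof -
    have "(\<Sum>v\<in>X'. park_at n p ({0..<n} - X') v x) = (\<Sum>v\<in>X'. if v = x then 1 else 0)"
    proof (intro sum.cong refl)
      fix v assume v: "v \<in> X'"
      have "x < n" using X'sub X'_def by auto
      then show "park_at n p ({0..<n} - X') v x = (if v = x then 1 else 0)"
        using wk_free_sum[OF npos, of v "{0..<n} - X'" p x] v X'_def
        by (auto simp: park_at_def)
    qed
    also have "\<dots> = 1" using X'_def finX by (simp add: sum.delta')
    finally show ?thesis .
  qed
  define G where "G c = (\<Sum>i\<in>{1..lenf n X' c}. park_at n p ({0..<n} - X') (rot n c i) x)" for c
  have Gc: "G c = (if c = x then Ll (lenf n X' c) p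
     else if rot n c (Suc (lenf n X' c)) = x then Rr (lenf n X' c) p else 0)" if c: "c \<in> X'" for c
  proof -
    obtain w where w: "w \<in> X'" "w \<noteq> c" using xy X'_def y c by auto
    have "G c = (\<Sum>i\<in>{1..lenf n X' c}. (if c = x then (\<Sum>k. qw (lenf n X' c) p k i 0)
     else if rot n c (Suc (lenf n X' c)) = x then (\<Sum>k. qw (lenf n X' c) p k i (Suc (lenf n X' c)))
     else 0))"
      unfolding G_def using park_block[OF X'sub c w, of x] X'_def by (intro sum.cong refl) auto
    then show ?thesis by (simp add: Rr_def Ll_def)
  qed
  have Gx: "G x = Ll (lenf n X y - 1 - a) p" using Gc[of x] X'_def L(2) by simp
  have Gy: "G y = Rr a p" using Gc[of y] X'_def L(1) xy x y by simp
  have G0: "G c = 0" if c: "c \<in> X - {y}" for c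
  proof -
    have "c \<noteq> x" using c xX by auto
    moreover have "rot n c (Suc (lenf n X' c)) \<noteq> x"
      using L(3)[of c] c lenf_in[OF npos Xsub, of c] xX X'_def by auto
    ultimately show ?thesis using Gc[of c] c X'_def by simp
  qed
  have B: "(\<Sum>c\<in>X'. G c) = Ll (lenf n X y - 1 - a) p + Rr a p"
  proof -
    have "(\<Sum>c\<in>X'. G c) = G x + (\<Sum>c\<in>X. G c)" using X'_def xX finX by simp
    also have "(\<Sum>c\<in>X. G c) = G y + (\<Sum>c\<in>X - {y}. G c)" using y finX by (simp add: sum.remove)
    also have "(\<Sum>c\<in>X - {y}. G c) = 0" using G0 by simp
    finally show ?thesis using Gx Gy by simp
  qed
  have "(\<Sum>v<n. park_at n p ({0..<n} - X') v x) =
      (\<Sum>v\<in>X'. park_at n p ({0..<n} - X') v x) + (\<Sum>c\<in>X'. G c)"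
    unfolding G_def by (rule sum_all[OF npos X'sub ne])
  then show ?thesis using A B X'_def by simp
qed

end


definition Gf :: "nat \<Rightarrow> nat set \<Rightarrow> real" where
  "Gf n S = (1 / real n ^ card S) * fact (card S) * (\<Prod>y\<in>{0..<n} - S. phi (lenf n ({0..<n} - S) y))"

lemma occ_main:
  assumes npos: "n > 0" and p0: "0 \<le> p" and p1: "p \<le> 1"
  shows "card S = k \<Longrightarrow> S \<subseteq> {0..<n} \<Longrightarrow> k < n \<Longrightarrow> occupied_prob n p k S = Gf n S"
proof (induction k arbitrary: S)
  case 0
  have fin: "finite S" using 0 finite_subset by blast
  then have S: "S = {}" using 0 by simp
  have "\<And>y. y \<in> {0..<n} \<Longrightarrow> lenf n {0..<n} y = 0"
    by (rule lenf_eqI[OF npos]) (auto simp: rot_lt[OF npos])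
  then have "(\<Prod>y\<in>{0..<n}. phi (lenf n {0..<n} y)) = 1" by (simp add: phi_def)
  then show ?case using S by (simp add: Gf_def)
next
  case (Suc k)
  have fin: "finite S" using Suc.prems finite_subset by blast
  define X where "X = {0..<n} - S"
  have Xsub: "X \<subseteq> {0..<n}" using X_def by auto
  have finX: "finite X" using Xsub finite_subset by blast
  have SX: "S = {0..<n} - X" using X_def Suc.prems by auto
  have ne: "X \<noteq> {}"
  proof
    assume "X = {}"
    then have "S = {0..<n}" using SX by auto
    then show False using Suc.prems by simp
  qed
  define K where "K = (1 / real n ^ k) * fact k / real n"
  define P where "P y = (\<Prod>z\<in>X - {y}. phi (lenf n X z))" for y
  define F where "F x = Gf n (S - {x}) * ((\<Sum>v<n. park_at n p (S - {x}) v x) / real n)" for x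
  have occ: "occupied_prob n p (Suc k) S = (\<Sum>x\<in>S. F x)"
  proof -
    have "occupied_prob n p (Suc k) S = (\<Sum>x\<in>S. occupied_prob n p k (S - {x}) * ((\<Sum>v<n. park_at n p (S - {x}) v x) / real n))"
      using Suc.prems by simp
    also have "\<dots> = (\<Sum>x\<in>S. F x)"
    proof (intro sum.cong refl)
      fix x assume x: "x \<in> S"
      have "occupied_prob n p k (S - {x}) = Gf n (S - {x})"
        using Suc.IH[of "S - {x}"] Suc.prems x fin by auto
      then show "occupied_prob n p k (S - {x}) * ((\<Sum>v<n. park_at n p (S - {x}) v x) / real n) = F x"
        by (simp add: F_def)
    qed
    finally show ?thesis .
  qed
  have Fval: "F (rot n y (Suc a)) = K * P y * (phi a * phi (lenf n X y - 1 - a) * (1 + Rr a p + Ll (lenf n X y - 1 - a) p))"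
    if y: "y \<in> X" and a: "a < lenf n X y" for y a
  proof -
    define x where "x = rot n y (Suc a)"
    define b where "b = lenf n X y - 1 - a"
    have xX: "x \<notin> X" using x_notin[OF npos Xsub y a] x_def by simp
    have xS: "x \<in> S" using xX SX rot_lt[OF npos] x_def by auto
    have Sx: "S - {x} = {0..<n} - insert x X" using SX by auto
    have Sx': "{0..<n} - (S - {x}) = insert x X" using SX xS Xsub by auto
    have cS: "card (S - {x}) = k" using Suc.prems xS fin by simp
    note L = lenf_insert[OF npos Xsub y a x_def]
    have prod: "(\<Prod>z\<in>insert x X. phi (lenf n (insert x X) z)) = phi b * phi a * P y"
    proof -
      have "(\<Prod>z\<in>insert x X. phi (lenf n (insert x X) z)) = phi (lenf n (insert x X) x) * (\<Prod>z\<in>X. phi (lenf n (insert x X) z))"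
        using xX finX by simp
      also have "(\<Prod>z\<in>X. phi (lenf n (insert x X) z)) = phi (lenf n (insert x X) y) * (\<Prod>z\<in>X - {y}. phi (lenf n (insert x X) z))"
        using y finX by (simp add: prod.remove)
      also have "(\<Prod>z\<in>X - {y}. phi (lenf n (insert x X) z)) = P y"
        unfolding P_def using L(3) by (intro prod.cong refl) auto
      finally show ?thesis using L(1) L(2) b_def by simp
    qed
    have park: "(\<Sum>v<n. park_at n p (S - {x}) v x) = 1 + Rr a p + Ll b p"
      unfolding Sx b_def using park_total[OF npos Xsub y a x_def] .
    have "F x = (1 / real n ^ k) * fact k * (phi b * phi a * P y) * ((1 + Rr a p + Ll b p) / real n)"
      unfolding F_def Gf_def Sx' cS prod park ..
    also have "\<dots> = K * P y * (phi a * phi b * (1 + Rr a p + Ll b p))"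
      by (simp add: K_def)
    finally show ?thesis using x_def b_def by simp
  qed
  have "(\<Sum>x\<in>S. F x) = (\<Sum>y\<in>X. \<Sum>i\<in>{1..lenf n X y}. F (rot n y i))"
    unfolding SX by (rule sum_blocks[OF npos Xsub ne])
  also have "\<dots> = (\<Sum>y\<in>X. \<Sum>a<lenf n X y. F (rot n y (Suc a)))"
    by (simp add: sum.atLeast1_atMost_eq)
  also have "\<dots> = (\<Sum>y\<in>X. K * P y * (\<Sum>a<lenf n X y. phi a * phi (lenf n X y - 1 - a) * (1 + Rr a p + Ll (lenf n X y - 1 - a) p)))"
    by (intro sum.cong refl) (simp add: Fval sum_distrib_left)
  also have "\<dots> = (\<Sum>y\<in>X. K * (real (lenf n X y) * (phi (lenf n X y) * P y)))"
    using block_RL[OF p0 p1] by (simp add: mult_ac)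
  also have "\<dots> = (\<Sum>y\<in>X. K * (real (lenf n X y) * (\<Prod>z\<in>X. phi (lenf n X z))))"
    unfolding P_def using finX by (intro sum.cong refl) (simp add: prod.remove)
  also have "\<dots> = K * real (\<Sum>y\<in>X. lenf n X y) * (\<Prod>z\<in>X. phi (lenf n X z))"
    by (simp add: sum_distrib_left sum_distrib_right mult_ac)
  also have "(\<Sum>y\<in>X. lenf n X y) = Suc k"
    using sum_lenf[OF npos Xsub ne] SX Suc.prems Xsub by (simp add: card_Diff_subset finX)
  finally have "(\<Sum>x\<in>S. F x) = K * real (Suc k) * (\<Prod>z\<in>X. phi (lenf n X z))" .
  also have "\<dots> = Gf n S"
    unfolding Gf_def K_def X_def[symmetric] using Suc.prems(1) npos by (simp add: field_simps)
  finally show ?case using occ by simp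
qed



lemma sw_less_iff:
  assumes s: "sorted_wrt (<) (xs :: nat list)" and i: "i < length xs" and j: "j < length xs"
  shows "(xs ! i < xs ! j) = (i < j)"
proof (cases i j rule: linorder_cases)
  case less then show ?thesis using sorted_wrt_nth_less[OF s less j] by simp
next
  case equal then show ?thesis by simp
next
  case greater then show ?thesis using sorted_wrt_nth_less[OF s greater i] by simp
qed

lemma gap_lenf:
  assumes npos: "n > 0" and Xsub: "X \<subseteq> {0..<n}" and ne: "X \<noteq> {}" and i: "i < card X"
  shows "gap n X i = lenf n X (sorted_list_of_set X ! i)"
proof -
  define xs where "xs = sorted_list_of_set X"
  define k where "k = length xs"
  have finX: "finite X" using Xsub finite_subset by blast
  have setx: "set xs = X" using finX xs_def by simp
  have sw: "sorted_wrt (<) xs" using xs_def strict_sorted_list_of_set by simp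
  have kc: "k = card X" using finX xs_def k_def by simp
  have ik: "i < k" using i kc by simp
  have mem: "\<And>m. m < k \<Longrightarrow> xs ! m \<in> X" using setx k_def by auto
  have memn: "\<And>m. m < k \<Longrightarrow> xs ! m < n" using mem Xsub by (meson atLeastLessThan_iff subsetD)
  have inX: "\<And>w. w \<in> X \<Longrightarrow> \<exists>m<k. xs ! m = w" using setx k_def by (auto simp: in_set_conv_nth)
  have less: "\<And>a b. a < k \<Longrightarrow> b < k \<Longrightarrow> (xs ! a < xs ! b) = (a < b)"
    using sw_less_iff[OF sw] k_def by simp
  define y where "y = xs ! i"
  define y' where "y' = xs ! ((i + 1) mod k)"
  have yX: "y \<in> X" using mem ik y_def by simp
  have yn: "y < n" "y' < n" using memn ik y_def y'_def by auto
  have g: "gap n X i = nat ((int y' - int y - 1) mod int n)"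
    unfolding gap_def Let_def y_def y'_def k_def xs_def by simp
  have H: "rot n y (Suc (gap n X i)) \<in> X \<and> (\<forall>d<gap n X i. rot n y (Suc d) \<notin> X)"
    proof (cases "i + 1 < k")
      case True
      then have y'e: "y' = xs ! (i+1)" using y'_def by simp
      have yy: "y < y'" using less[OF ik True] y_def y'e by simp
      have "(int y' - int y - 1) mod int n = int y' - int y - 1"
        using yy yn by (intro mod_pos_pos_trivial) auto
      then have gv: "gap n X i = y' - y - 1" using g yy by simp
      have "rot n y (Suc (gap n X i)) = y'" using gv yy yn by (simp add: rot_def)
      moreover have "y' \<in> X" using mem True y'e by simp
      moreover have "\<forall>d<gap n X i. rot n y (Suc d) \<notin> X"
      proof (intro allI impI notI)
        fix d assume d: "d < gap n X i" and w: "rot n y (Suc d) \<in> X"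
        have wv: "rot n y (Suc d) = y + Suc d" using d gv yy yn by (simp add: rot_def)
        obtain m where m: "m < k" "xs ! m = y + Suc d" using inX[OF w] wv by auto
        have "y < xs ! m" "xs ! m < y'" using m d gv by auto
        then have "i < m" "m < i + 1" using less[OF ik m(1)] less[OF m(1) True] y_def y'e by auto
        then show False by simp
      qed
      ultimately show ?thesis by simp
    next
      case False
      then have ik1: "i + 1 = k" using ik by simp
      then have y'e: "y' = xs ! 0" using y'_def by simp
      have k0: "0 < k" using ik by simp
      have y'y: "y' \<le> y"
      proof (cases "i = 0")
        case True then show ?thesis using y_def y'e by simp
      next
        case False
        then have "0 < i" by simp
        then show ?thesis using less[OF k0 ik] y_def y'e by simp
      qed
      have tn: "int y' - int y - 1 + int n = int (n + y' - y - 1)" using y'y yn by linarith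
      have "(int y' - int y - 1) mod int n = (int y' - int y - 1 + int n) mod int n"
        by (rule mod_add_self2[symmetric])
      also have "\<dots> = int y' - int y - 1 + int n"
        using y'y yn by (intro mod_pos_pos_trivial) linarith+
      finally have "(int y' - int y - 1) mod int n = int (n + y' - y - 1)" using tn by simp
      then have gv: "gap n X i = n + y' - y - 1" using g by (simp only: nat_int)
      have e1: "y + Suc (n + y' - y - 1) = y' + n" using y'y yn by linarith
      have "rot n y (Suc (gap n X i)) = (y' + n) mod n" unfolding gv rot_def e1 ..
      then have "rot n y (Suc (gap n X i)) = y'" using yn by simp
      moreover have "y' \<in> X" using mem k0 y'e by simp
      moreover have "\<forall>d<gap n X i. rot n y (Suc d) \<notin> X"
      proof (intro allI impI notI)
        fix d assume d: "d < gap n X i" and w: "rot n y (Suc d) \<in> X"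
        obtain m where m: "m < k" "xs ! m = rot n y (Suc d)" using inX[OF w] by blast
        show False
        proof (cases "y + Suc d < n")
          case True
          then have "xs ! m = y + Suc d" using m by (simp add: rot_def)
          then have "y < xs ! m" by simp
          then have "i < m" using less[OF ik m(1)] y_def by simp
          then show False using m ik1 by simp
        next
          case False
          then have "(y + Suc d) mod n = (y + Suc d - n) mod n" by (simp add: le_mod_geq)
          also have "y + Suc d - n < n" using d gv y'y yn by linarith
          then have "(y + Suc d - n) mod n = y + Suc d - n" by simp
          finally have "xs ! m = y + Suc d - n" using m by (simp add: rot_def)
          then have "xs ! m < y'" using d gv y'y False by linarith
          then have "m < 0" using less[OF m(1) k0] y'e by simp
          then show False by simp
        qed
      qed
      ultimately show ?thesis by simp
    qed
  show ?thesis unfolding xs_def[symmetric] y_def[symmetric]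
    using lenf_eqI[OF npos Xsub, of y "gap n X i"] H by auto
qed

theorem mainTheorem4:
  fixes n Nb :: nat and p :: real and X :: "nat set"
  assumes "n \<ge> 1" and "Nb < n" and "0 \<le> p" and "p \<le> 1"
    and "X \<subseteq> {0..<n}" and "card X = n - Nb"
  shows "free_prob n p Nb X =
    (1 / real n ^ Nb) *
    (fact Nb / (\<Prod>i<n - Nb. fact (gap n X i))) *
    (\<Prod>i<n - Nb. real (gap n X i + 1) ^ (gap n X i - 1))"
proof -
  have npos: "n > 0" using assms by simp
  have finX: "finite X" using assms(5) finite_subset by blast
  define S where "S = {0..<n} - X"
  have cS: "card S = Nb" using assms finX unfolding S_def by (simp add: card_Diff_subset)
  have SX: "{0..<n} - S = X" using assms(5) S_def by auto
  have ne: "X \<noteq> {}" using assms(2,6) by auto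
  have "free_prob n p Nb X = Gf n S"
    unfolding free_prob_def S_def[symmetric]
    using occ_main[OF npos assms(3,4) cS] S_def assms(2) by auto
  also have "\<dots> = (1 / real n ^ Nb) * fact Nb * (\<Prod>y\<in>X. phi (lenf n X y))"
    unfolding Gf_def SX cS ..
  finally have F: "free_prob n p Nb X = (1 / real n ^ Nb) * fact Nb * (\<Prod>y\<in>X. phi (lenf n X y))" .
  define xs where "xs = sorted_list_of_set X"
  have bij: "bij_betw ((!) xs) {..<n - Nb} X"
    using finX assms(6) unfolding xs_def by (intro bij_betw_nth) auto
  have reidx: "(\<Prod>i<n - Nb. h (gap n X i)) = (\<Prod>y\<in>X. h (lenf n X y))" for h :: "nat \<Rightarrow> real"
  proof -
    have "(\<Prod>i<n - Nb. h (gap n X i)) = (\<Prod>i<n - Nb. h (lenf n X (xs ! i)))"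
      using gap_lenf[OF npos assms(5) ne] assms(6) unfolding xs_def by (intro prod.cong refl) auto
    also have "\<dots> = (\<Prod>y\<in>X. h (lenf n X y))"
      using prod.reindex_bij_betw[OF bij, of "\<lambda>y. h (lenf n X y)"] by simp
    finally show ?thesis .
  qed
  have "(fact Nb / (\<Prod>i<n - Nb. fact (gap n X i))) * (\<Prod>i<n - Nb. real (gap n X i + 1) ^ (gap n X i - 1))
      = fact Nb * ((\<Prod>y\<in>X. real (lenf n X y + 1) ^ (lenf n X y - 1)) / (\<Prod>y\<in>X. fact (lenf n X y)))"
    using reidx[of fact] reidx[of "\<lambda>l. real (l + 1) ^ (l - 1)"] by simp
  also have "\<dots> = fact Nb * (\<Prod>y\<in>X. phi (lenf n X y))"
    by (simp add: prod_dividef phi_def)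
  finally have E: "(fact Nb / (\<Prod>i<n - Nb. fact (gap n X i))) * (\<Prod>i<n - Nb. real (gap n X i + 1) ^ (gap n X i - 1))
      = fact Nb * (\<Prod>y\<in>X. phi (lenf n X y))" .
  show ?thesis by (simp only: F mult.assoc E)
qed


end
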